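(* Let $\Lambda=(I,\varphi_i,\gamma_{ij})$ be a direct system of formulas in a functional language $\mathcal{L}$. Suppose $\{\mathcal{B}_i: i\in I\}$ is a family of $\mathcal{L}$-algebras such that $\varphi_i$ can be realized in $\mathcal{B}_i$ for each $i\in I$. Then there is an ultrafilter $D$ over $I$ such that the limit algebra $L(\Lambda)$ embeds into the ultraproduct $\prod_{i\in I}\mathcal{B}_i/D$.
   Context: Functional language: operation symbols $F$ (arity $n_F$) and constants only. A diagram-formula in a finite reduct $\mathcal{L}'$ of $\mathcal{L}$ in a finite variable set $X$ is a conjunction of atomic formulas and negated atomic formulas of $\mathcal{L}'$ such that: $\neg(x=y)$ is a conjunct for all distinct $x,y\in X$; for each operation $F\in\mathcal{L}'$ and $(x_0,\dots,x_{n_F})\in X^{n_F+1}$ exactly one of $F(x_1,\dots,x_{n_F})=x_0$ and its negation is a conjunct; for each constant $c\in\mathcal{L}'$ and $x\in X$ exactly one of $x=c$, $\neg(x=c)$ is a conjunct. A direct system of formulas $\Lambda=(I,\varphi_i,\gamma_{ij})$: $(I,\le)$ a directed poset; for each $i$ a consistent diagram-formula $\varphi_i$ in a finite reduct $\mathcal{L}_i$ and finite variables $X_i$; maps $\gamma_{ij}:X_i\to X_j$ for $i\le j$ with $\gamma_{ii}=\mathrm{id}$, $\gamma_{jk}\circ\gamma_{ij}=\gamma_{ik}$, and every conjunct of $\varphi_i(\gamma_{ij}(X_i))$ a conjunct of $\varphi_j$; for every constant $c$ some $\varphi_i$ has a conjunct $x=c$ with $x\in X_i$; for every $F$, $i$,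 $(x_1,\dots,x_{n_F})\in X_i^{n_F}$ there is $j\ge i$ with a conjunct $F(\gamma_{ij}(x_1),\dots,\gamma_{ij}(x_{n_F}))=x_j$ in $\varphi_j$, $x_j\in X_j$. The limit algebra $L(\Lambda)$ has universe $\{(x,i):x\in X_i,i\in I\}/\!\equiv$, where $(x,i)\equiv(y,j)$ iff $\gamma_{ik}(x)=\gamma_{jk}(y)$ for some $k\ge i,j$; the constant $c$ is the class $\langle x,i\rangle$ of any $(x,i)$ with $x=c$ a conjunct of $\varphi_i$, and $F(\langle x_1,i_1\rangle,\dots,\langle x_{n_F},i_{n_F}\rangle)=\langle x_j,j\rangle$ for any $j\ge i_1,\dots,i_{n_F}$ such that $\varphi_j$ contains $F(\gamma_{i_1j}(x_1),\dots,\gamma_{i_{n_F}j}(x_{n_F}))=x_j$ (this is well defined). A formula $\varphi_i$ is realized in $\mathcal{B}$ if it is true in $\mathcal{B}$ under some assignment $X_i\to B$. *)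

theory Defs
  imports Main
begin

text \<open>A functional language L is given by a type 'f of operation symbols with
  arity function ar, and a type 'c of constant symbols.\<close>

type_synonym ('b,'f,'c) alg = "'b set \<times> ('f \<Rightarrow> 'b list \<Rightarrow> 'b) \<times> ('c \<Rightarrow> 'b)"

definition carr :: "('b,'f,'c) alg \<Rightarrow> 'b set" where "carr A = fst A"
definition opr :: "('b,'f,'c) alg \<Rightarrow> 'f \<Rightarrow> 'b list \<Rightarrow> 'b" where "opr A = fst (snd A)"
definition cst :: "('b,'f,'c) alg \<Rightarrow> 'c \<Rightarrow> 'b" where "cst A = snd (snd A)"

definition is_alg :: "('f \<Rightarrow> nat) \<Rightarrow> ('b,'f,'c) alg \<Rightarrow> bool" where
  "is_alg ar A \<longleftrightarrow> carr A \<noteq> {}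
     \<and> (\<forall>F xs. length xs = ar F \<and> set xs \<subseteq> carr A \<longrightarrow> opr A F xs \<in> carr A)
     \<and> (\<forall>c. cst A c \<in> carr A)"

definition alg_embedding ::
  "('f \<Rightarrow> nat) \<Rightarrow> ('a,'f,'c) alg \<Rightarrow> ('b,'f,'c) alg \<Rightarrow> ('a \<Rightarrow> 'b) \<Rightarrow> bool" where
  "alg_embedding ar A B h \<longleftrightarrow>
     (\<forall>x\<in>carr A. h x \<in> carr B) \<and> inj_on h (carr A)
     \<and> (\<forall>c. h (cst A c) = cst B c)
     \<and> (\<forall>F as. length as = ar F \<and> set as \<subseteq> carr A \<longrightarrow> h (opr A F as) = opr B F (map h as))"

text \<open>A literal is (True, a) for a, (False, a) for its negation; a conjunction of
  literals is represented by the (finite) set of its conjuncts.\<close>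

datatype ('f,'c,'v) atom = EqV 'v 'v | EqC 'v 'c | EqOp 'f "'v list" 'v

type_synonym ('f,'c,'v) lit = "bool \<times> ('f,'c,'v) atom"

fun atom_map :: "('v \<Rightarrow> 'w) \<Rightarrow> ('f,'c,'v) atom \<Rightarrow> ('f,'c,'w) atom" where
  "atom_map g (EqV x y) = EqV (g x) (g y)"
| "atom_map g (EqC x c) = EqC (g x) c"
| "atom_map g (EqOp F xs x) = EqOp F (map g xs) (g x)"

definition lit_map :: "('v \<Rightarrow> 'w) \<Rightarrow> ('f,'c,'v) lit \<Rightarrow> ('f,'c,'w) lit" where
  "lit_map g l = (fst l, atom_map g (snd l))"

fun atom_holds :: "('b,'f,'c) alg \<Rightarrow> ('v \<Rightarrow> 'b) \<Rightarrow> ('f,'c,'v) atom \<Rightarrow> bool" where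
  "atom_holds A s (EqV x y) \<longleftrightarrow> s x = s y"
| "atom_holds A s (EqC x c) \<longleftrightarrow> s x = cst A c"
| "atom_holds A s (EqOp F xs x) \<longleftrightarrow> opr A F (map s xs) = s x"

definition lit_holds :: "('b,'f,'c) alg \<Rightarrow> ('v \<Rightarrow> 'b) \<Rightarrow> ('f,'c,'v) lit \<Rightarrow> bool" where
  "lit_holds A s l \<longleftrightarrow> (atom_holds A s (snd l) \<longleftrightarrow> fst l)"

definition realized :: "('b,'f,'c) alg \<Rightarrow> 'v set \<Rightarrow> ('f,'c,'v) lit set \<Rightarrow> bool" where
  "realized A X phi \<longleftrightarrow> (\<exists>s. (\<forall>x\<in>X. s x \<in> carr A) \<and> (\<forall>l\<in>phi. lit_holds A s l))"

text \<open>Consistency: the formula has a model, i.e. is realized in some L-algebra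
  (by Loewenheim--Skolem a countable one suffices, so we take universes in nat).\<close>
definition consistent :: "('f \<Rightarrow> nat) \<Rightarrow> 'v set \<Rightarrow> ('f,'c,'v) lit set \<Rightarrow> bool" where
  "consistent ar X phi \<longleftrightarrow> (\<exists>A :: (nat,'f,'c) alg. is_alg ar A \<and> realized A X phi)"

fun atom_in :: "('f \<Rightarrow> nat) \<Rightarrow> 'f set \<Rightarrow> 'c set \<Rightarrow> 'v set \<Rightarrow> ('f,'c,'v) atom \<Rightarrow> bool" where
  "atom_in ar Fs Cs X (EqV x y) \<longleftrightarrow> x \<in> X \<and> y \<in> X"
| "atom_in ar Fs Cs X (EqC x c) \<longleftrightarrow> x \<in> X \<and> c \<in> Cs"
| "atom_in ar Fs Cs X (EqOp F xs x) \<longleftrightarrow> F \<in> Fs \<and> length xs = ar F \<and> set xs \<subseteq> X \<and> x \<in> X"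

definition diagram_formula ::
  "('f \<Rightarrow> nat) \<Rightarrow> 'f set \<Rightarrow> 'c set \<Rightarrow> 'v set \<Rightarrow> ('f,'c,'v) lit set \<Rightarrow> bool" where
  "diagram_formula ar Fs Cs X phi \<longleftrightarrow>
     finite Fs \<and> finite Cs \<and> finite X \<and> finite phi
     \<and> (\<forall>l\<in>phi. atom_in ar Fs Cs X (snd l))
     \<and> (\<forall>x\<in>X. \<forall>y\<in>X. x \<noteq> y \<longrightarrow> (False, EqV x y) \<in> phi)
     \<and> (\<forall>F\<in>Fs. \<forall>x0\<in>X. \<forall>xs. length xs = ar F \<and> set xs \<subseteq> X \<longrightarrow>
          ((True, EqOp F xs x0) \<in> phi \<longleftrightarrow> (False, EqOp F xs x0) \<notin> phi))
     \<and> (\<forall>c\<in>Cs. \<forall>x\<in>X. ((True, EqC x c) \<in> phi \<longleftrightarrow> (False, EqC x c) \<notin> phi))"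

definition direct_system ::
  "('f \<Rightarrow> nat) \<Rightarrow> 'i set \<Rightarrow> ('i \<Rightarrow> 'i \<Rightarrow> bool) \<Rightarrow> ('i \<Rightarrow> 'f set) \<Rightarrow> ('i \<Rightarrow> 'c set)
    \<Rightarrow> ('i \<Rightarrow> 'v set) \<Rightarrow> ('i \<Rightarrow> ('f,'c,'v) lit set) \<Rightarrow> ('i \<Rightarrow> 'i \<Rightarrow> 'v \<Rightarrow> 'v) \<Rightarrow> bool" where
  "direct_system ar I le Fs Cs X phi gam \<longleftrightarrow>
     \<comment> \<open>directed poset (directed sets are nonempty)\<close>
     I \<noteq> {}
     \<and> (\<forall>i\<in>I. le i i)
     \<and> (\<forall>i\<in>I. \<forall>j\<in>I. le i j \<and> le j i \<longrightarrow> i = j)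
     \<and> (\<forall>i\<in>I. \<forall>j\<in>I. \<forall>k\<in>I. le i j \<and> le j k \<longrightarrow> le i k)
     \<and> (\<forall>i\<in>I. \<forall>j\<in>I. \<exists>k\<in>I. le i k \<and> le j k)
     \<comment> \<open>consistent diagram-formulas\<close>
     \<and> (\<forall>i\<in>I. diagram_formula ar (Fs i) (Cs i) (X i) (phi i) \<and> consistent ar (X i) (phi i))
     \<comment> \<open>the maps gamma\<close>
     \<and> (\<forall>i\<in>I. \<forall>j\<in>I. le i j \<longrightarrow> (\<forall>x\<in>X i. gam i j x \<in> X j))
     \<and> (\<forall>i\<in>I. \<forall>x\<in>X i. gam i i x = x)
     \<and> (\<forall>i\<in>I. \<forall>j\<in>I. \<forall>k\<in>I. le i j \<and> le j k \<longrightarrow> (\<forall>x\<in>X i. gam j k (gam i j x) = gam i k x))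
     \<and> (\<forall>i\<in>I. \<forall>j\<in>I. le i j \<longrightarrow> lit_map (gam i j) ` phi i \<subseteq> phi j)
     \<comment> \<open>every constant is named\<close>
     \<and> (\<forall>c. \<exists>i\<in>I. \<exists>x\<in>X i. (True, EqC x c) \<in> phi i)
     \<comment> \<open>every operation is eventually defined\<close>
     \<and> (\<forall>F. \<forall>i\<in>I. \<forall>xs. length xs = ar F \<and> set xs \<subseteq> X i \<longrightarrow>
          (\<exists>j\<in>I. le i j \<and> (\<exists>x\<in>X j. (True, EqOp F (map (gam i j) xs) x) \<in> phi j)))"

definition limit_rel ::
  "'i set \<Rightarrow> ('i \<Rightarrow> 'i \<Rightarrow> bool) \<Rightarrow> ('i \<Rightarrow> 'v set) \<Rightarrow> ('i \<Rightarrow> 'i \<Rightarrow> 'v \<Rightarrow> 'v) \<Rightarrow> (('v \<times> 'i) \<times> ('v \<times> 'i)) set" where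
  "limit_rel I le X gam = {((x,i),(y,j)). i \<in> I \<and> j \<in> I \<and> x \<in> X i \<and> y \<in> X j \<and>
      (\<exists>k\<in>I. le i k \<and> le j k \<and> gam i k x = gam j k y)}"

definition limit_alg ::
  "'i set \<Rightarrow> ('i \<Rightarrow> 'i \<Rightarrow> bool) \<Rightarrow> ('i \<Rightarrow> 'v set) \<Rightarrow> ('i \<Rightarrow> ('f,'c,'v) lit set)
    \<Rightarrow> ('i \<Rightarrow> 'i \<Rightarrow> 'v \<Rightarrow> 'v) \<Rightarrow> (('v \<times> 'i) set,'f,'c) alg" where
  "limit_alg I le X phi gam =
    (let R = limit_rel I le X gam;
         rep = (\<lambda>a :: ('v \<times> 'i) set. SOME p. p \<in> a)
     in ({(x,i). i \<in> I \<and> x \<in> X i} // R,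
         (\<lambda>F as. R `` {SOME (x,j). j \<in> I \<and> x \<in> X j \<and> (\<forall>a\<in>set as. le (snd (rep a)) j)
                         \<and> (True, EqOp F (map (\<lambda>a. gam (snd (rep a)) j (fst (rep a))) as) x) \<in> phi j}),
         (\<lambda>c. R `` {SOME (x,i). i \<in> I \<and> x \<in> X i \<and> (True, EqC x c) \<in> phi i})))"

definition ultrafilter_on :: "'i set \<Rightarrow> 'i set set \<Rightarrow> bool" where
  "ultrafilter_on I D \<longleftrightarrow> D \<subseteq> Pow I \<and> I \<in> D \<and> {} \<notin> D
     \<and> (\<forall>A\<in>D. \<forall>B\<in>D. A \<inter> B \<in> D)
     \<and> (\<forall>A\<in>D. \<forall>B. A \<subseteq> B \<and> B \<subseteq> I \<longrightarrow> B \<in> D)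
     \<and> (\<forall>A. A \<subseteq> I \<longrightarrow> A \<in> D \<or> I - A \<in> D)"

definition ultra_rel :: "'i set \<Rightarrow> 'i set set \<Rightarrow> ('i \<Rightarrow> ('b,'f,'c) alg) \<Rightarrow> (('i \<Rightarrow> 'b) \<times> ('i \<Rightarrow> 'b)) set" where
  "ultra_rel I D B = {(f,g). (\<forall>i\<in>I. f i \<in> carr (B i)) \<and> (\<forall>i\<in>I. g i \<in> carr (B i))
                        \<and> {i \<in> I. f i = g i} \<in> D}"

definition ultraproduct :: "'i set \<Rightarrow> 'i set set \<Rightarrow> ('i \<Rightarrow> ('b,'f,'c) alg) \<Rightarrow> (('i \<Rightarrow> 'b) set,'f,'c) alg" where
  "ultraproduct I D B =
    (let R = ultra_rel I D B;
         rep = (\<lambda>a :: ('i \<Rightarrow> 'b) set. SOME f. f \<in> a)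
     in ({f. \<forall>i\<in>I. f i \<in> carr (B i)} // R,
         (\<lambda>F as. R `` {\<lambda>i. opr (B i) F (map (\<lambda>a. rep a i) as)}),
         (\<lambda>c. R `` {\<lambda>i. cst (B i) c})))"

end

theory Submission
  imports Defs
begin


definition pfilter :: "'i set \<Rightarrow> 'i set set \<Rightarrow> bool" where
 "pfilter I F \<longleftrightarrow> F \<subseteq> Pow I \<and> I \<in> F \<and> {} \<notin> F \<and> (\<forall>A\<in>F. \<forall>B\<in>F. A \<inter> B \<in> F)
    \<and> (\<forall>A\<in>F. \<forall>B. A \<subseteq> B \<and> B \<subseteq> I \<longrightarrow> B \<in> F)"

lemma ultrafilter_exists:
  assumes "I \<noteq> {}" "S \<subseteq> Pow I" "{} \<notin> S" "\<forall>A\<in>S. \<forall>B\<in>S. \<exists>C\<in>S. C \<subseteq> A \<inter> B"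
  shows "\<exists>D. ultrafilter_on I D \<and> S \<subseteq> D"
proof -
  define P where "P = {F. pfilter I F \<and> S \<subseteq> F}"
  define F0 where "F0 = {A. A \<subseteq> I \<and> (A = I \<or> (\<exists>C\<in>S. C \<subseteq> A))}"
  have F0: "F0 \<in> P"
  proof -
    have "\<forall>A\<in>F0. \<forall>B\<in>F0. A \<inter> B \<in> F0"
    proof (intro ballI)
      fix A B assume a: "A \<in> F0" "B \<in> F0"
      show "A \<inter> B \<in> F0"
      proof (cases "A = I")
        case True thus ?thesis using a by (auto simp: F0_def Int_absorb1)
      next
        case False
        then obtain C where C: "C \<in> S" "C \<subseteq> A" using a by (auto simp: F0_def)
        show ?thesis
        proof (cases "B = I")
          case True thus ?thesis using a by (auto simp: F0_def Int_absorb2)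
        next
          case False
          then obtain C' where C': "C' \<in> S" "C' \<subseteq> B" using a by (auto simp: F0_def)
          then obtain E where "E \<in> S" "E \<subseteq> C \<inter> C'" using assms(4) C by blast
          have "A \<inter> B \<subseteq> I" using a by (auto simp: F0_def)
          moreover have "E \<subseteq> A \<inter> B" using \<open>E \<subseteq> C \<inter> C'\<close> C C' by blast
          ultimately show ?thesis using \<open>E \<in> S\<close> unfolding F0_def by blast
        qed
      qed
    qed
    moreover have "{} \<notin> F0" using assms(1,3) by (auto simp: F0_def)
    moreover have "\<forall>A\<in>F0. \<forall>B. A \<subseteq> B \<and> B \<subseteq> I \<longrightarrow> B \<in> F0" unfolding F0_def by blast
    moreover have "S \<subseteq> F0" using assms(2) unfolding F0_def by blast
    ultimately show ?thesis unfolding P_def pfilter_def F0_def by blast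
  qed
  have "\<forall>C\<in>chains P. \<exists>U\<in>P. \<forall>X\<in>C. X \<subseteq> U"
  proof
    fix C assume C: "C \<in> chains P"
    show "\<exists>U\<in>P. \<forall>X\<in>C. X \<subseteq> U"
    proof (cases "C = {}")
      case True thus ?thesis using F0 by blast
    next
      case False
      have CP: "C \<subseteq> P" and ch: "\<forall>x\<in>C. \<forall>y\<in>C. x \<subseteq> y \<or> y \<subseteq> x"
        using C unfolding chains_def chain_subset_def by auto
      have "\<Union>C \<in> P"
      proof -
        have "\<forall>A\<in>\<Union>C. \<forall>B\<in>\<Union>C. A \<inter> B \<in> \<Union>C"
        proof (intro ballI)
          fix A B assume "A \<in> \<Union>C" "B \<in> \<Union>C"
          then obtain F1 F2 where "F1 \<in> C" "F2 \<in> C" "A \<in> F1" "B \<in> F2" by auto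
          moreover have "F1 \<subseteq> F2 \<or> F2 \<subseteq> F1" using ch \<open>F1 \<in> C\<close> \<open>F2 \<in> C\<close> by blast
          ultimately show "A \<inter> B \<in> \<Union>C" using CP unfolding P_def pfilter_def by blast
        qed
        moreover obtain F1 where "F1 \<in> C" using False by blast
        moreover have pf: "\<And>F. F \<in> C \<Longrightarrow> pfilter I F \<and> S \<subseteq> F" using CP unfolding P_def by blast
        ultimately have i1: "\<forall>A\<in>\<Union>C. \<forall>B\<in>\<Union>C. A \<inter> B \<in> \<Union>C" and f1: "F1 \<in> C" and
           pf: "\<And>F. F \<in> C \<Longrightarrow> pfilter I F \<and> S \<subseteq> F" by blast+
        have i2: "\<Union>C \<subseteq> Pow I" using pf unfolding pfilter_def by blast
        have i3: "I \<in> \<Union>C" using pf[OF f1] f1 unfolding pfilter_def by blast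
        have i4: "{} \<notin> \<Union>C" using pf unfolding pfilter_def by blast
        have i5: "\<forall>A\<in>\<Union>C. \<forall>B. A \<subseteq> B \<and> B \<subseteq> I \<longrightarrow> B \<in> \<Union>C"
        proof (intro ballI allI impI)
          fix A B assume "A \<in> \<Union>C" "A \<subseteq> B \<and> B \<subseteq> I"
          then obtain F where "F \<in> C" "A \<in> F" by blast
          hence "B \<in> F" using pf[OF \<open>F \<in> C\<close>] \<open>A \<subseteq> B \<and> B \<subseteq> I\<close> unfolding pfilter_def by blast
          thus "B \<in> \<Union>C" using \<open>F \<in> C\<close> by blast
        qed
        have i6: "S \<subseteq> \<Union>C" using pf[OF f1] f1 by blast
        show ?thesis unfolding P_def pfilter_def mem_Collect_eq using i1 i2 i3 i4 i5 i6 by simp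
      qed
      thus ?thesis by blast
    qed
  qed
  from Zorn_Lemma2[OF this] obtain M where M: "M \<in> P" and max: "\<forall>X\<in>P. M \<subseteq> X \<longrightarrow> X = M" by blast
  have Mp: "M \<subseteq> Pow I" "I \<in> M" "{} \<notin> M" "\<forall>A\<in>M. \<forall>B\<in>M. A \<inter> B \<in> M"
    "\<forall>A\<in>M. \<forall>B. A \<subseteq> B \<and> B \<subseteq> I \<longrightarrow> B \<in> M" "S \<subseteq> M"
    using M unfolding P_def pfilter_def by auto
  have "\<forall>A. A \<subseteq> I \<longrightarrow> A \<in> M \<or> I - A \<in> M"
  proof (intro allI impI)
    fix A assume AI: "A \<subseteq> I"
    show "A \<in> M \<or> I - A \<in> M"
    proof (cases "\<exists>C\<in>M. C \<inter> A = {}")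
      case True
      then obtain C where C: "C \<in> M" "C \<inter> A = {}" by blast
      have "C \<subseteq> I" using C Mp(1) by blast
      hence "C \<subseteq> I - A" using C by blast
      hence "I - A \<in> M" using Mp(5) C by blast
      thus ?thesis by blast
    next
      case False
      define M' where "M' = {B. B \<subseteq> I \<and> (\<exists>C\<in>M. C \<inter> A \<subseteq> B)}"
      have j1: "\<forall>X\<in>M'. \<forall>Y\<in>M'. X \<inter> Y \<in> M'"
      proof (intro ballI)
        fix X Y assume "X \<in> M'" "Y \<in> M'"
        then obtain C1 C2 where c: "C1 \<in> M" "C2 \<in> M" "C1 \<inter> A \<subseteq> X" "C2 \<inter> A \<subseteq> Y" "X \<subseteq> I" "Y \<subseteq> I"
          unfolding M'_def by blast
        have "C1 \<inter> C2 \<in> M" using c Mp(4) by blast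
        moreover have "(C1 \<inter> C2) \<inter> A \<subseteq> X \<inter> Y" using c by blast
        moreover have "X \<inter> Y \<subseteq> I" using c by blast
        ultimately show "X \<inter> Y \<in> M'" unfolding M'_def by blast
      qed
      have j2: "{} \<notin> M'" using False unfolding M'_def by blast
      have j3: "M \<subseteq> M'"
      proof
        fix X assume "X \<in> M" thus "X \<in> M'" using Mp(1) unfolding M'_def by blast
      qed
      have j4: "M' \<subseteq> Pow I" unfolding M'_def by blast
      have j5: "\<forall>X\<in>M'. \<forall>Y. X \<subseteq> Y \<and> Y \<subseteq> I \<longrightarrow> Y \<in> M'" unfolding M'_def by blast
      have j6: "I \<in> M'" using j3 Mp(2) by blast
      have j7: "S \<subseteq> M'" using j3 Mp(6) by blast
      have "M' \<in> P" unfolding P_def pfilter_def mem_Collect_eq using j1 j2 j4 j5 j6 j7 by simp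
      hence "M' = M" using max j3 by blast
      moreover have "A \<in> M'" using Mp(2) AI unfolding M'_def by blast
      ultimately show ?thesis by blast
    qed
  qed
  hence "ultrafilter_on I M" using Mp unfolding ultrafilter_on_def by blast
  thus ?thesis using Mp by blast
qed


locale LS =
  fixes ar :: "'f \<Rightarrow> nat"
    and I :: "'i set" and le :: "'i \<Rightarrow> 'i \<Rightarrow> bool"
    and Fs :: "'i \<Rightarrow> 'f set" and Cs :: "'i \<Rightarrow> 'c set"
    and X :: "'i \<Rightarrow> 'v set" and phi :: "'i \<Rightarrow> ('f,'c,'v) lit set"
    and gam :: "'i \<Rightarrow> 'i \<Rightarrow> 'v \<Rightarrow> 'v"
    and B :: "'i \<Rightarrow> ('b,'f,'c) alg"
    and D :: "'i set set"
    and s :: "'i \<Rightarrow> 'v \<Rightarrow> 'b"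
  assumes ds: "direct_system ar I le Fs Cs X phi gam"
    and algs: "\<forall>i\<in>I. is_alg ar (B i)"
    and sc: "\<forall>i\<in>I. \<forall>x\<in>X i. s i x \<in> carr (B i)"
    and sh: "\<forall>i\<in>I. \<forall>l\<in>phi i. lit_holds (B i) (s i) l"
    and uf: "ultrafilter_on I D"
    and cones: "\<forall>i\<in>I. {k\<in>I. le i k} \<in> D"
begin

lemma dsf: "I \<noteq> {}" "\<forall>i\<in>I. le i i" "\<forall>i\<in>I. \<forall>j\<in>I. \<forall>k\<in>I. le i j \<and> le j k \<longrightarrow> le i k"
   "\<forall>i\<in>I. \<forall>j\<in>I. \<exists>k\<in>I. le i k \<and> le j k"
   "\<forall>i\<in>I. diagram_formula ar (Fs i) (Cs i) (X i) (phi i)"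
   "\<forall>i\<in>I. \<forall>j\<in>I. le i j \<longrightarrow> (\<forall>x\<in>X i. gam i j x \<in> X j)"
   "\<forall>i\<in>I. \<forall>x\<in>X i. gam i i x = x"
   "\<forall>i\<in>I. \<forall>j\<in>I. \<forall>k\<in>I. le i j \<and> le j k \<longrightarrow> (\<forall>x\<in>X i. gam j k (gam i j x) = gam i k x)"
   "\<forall>i\<in>I. \<forall>j\<in>I. le i j \<longrightarrow> lit_map (gam i j) ` phi i \<subseteq> phi j"
   "\<forall>c. \<exists>i\<in>I. \<exists>x\<in>X i. (True, EqC x c) \<in> phi i"
   "\<forall>F. \<forall>i\<in>I. \<forall>xs. length xs = ar F \<and> set xs \<subseteq> X i \<longrightarrow>
          (\<exists>j\<in>I. le i j \<and> (\<exists>x\<in>X j. (True, EqOp F (map (gam i j) xs) x) \<in> phi j))"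
  using ds unfolding direct_system_def apply -
  subgoal by (elim conjE, assumption)
  subgoal by (elim conjE, assumption)
  subgoal by (elim conjE, assumption)
  subgoal by (elim conjE, assumption)
  subgoal by (elim conjE) fast
  subgoal by (elim conjE, assumption)
  subgoal by (elim conjE, assumption)
  subgoal by (elim conjE, assumption)
  subgoal by (elim conjE, assumption)
  subgoal by (elim conjE, assumption)
  subgoal by (elim conjE, assumption)
  done

lemma refl': "i \<in> I \<Longrightarrow> le i i" using dsf(2) by blast
lemma trans': "i \<in> I \<Longrightarrow> j \<in> I \<Longrightarrow> k \<in> I \<Longrightarrow> le i j \<Longrightarrow> le j k \<Longrightarrow> le i k" using dsf(3) by blast
lemma dir: "i \<in> I \<Longrightarrow> j \<in> I \<Longrightarrow> \<exists>k\<in>I. le i k \<and> le j k" using dsf(4) by blast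
lemma gamX: "i \<in> I \<Longrightarrow> j \<in> I \<Longrightarrow> le i j \<Longrightarrow> x \<in> X i \<Longrightarrow> gam i j x \<in> X j" using dsf(6) by blast
lemma gamid: "i \<in> I \<Longrightarrow> x \<in> X i \<Longrightarrow> gam i i x = x" using dsf(7) by blast
lemma gamc: "i \<in> I \<Longrightarrow> j \<in> I \<Longrightarrow> k \<in> I \<Longrightarrow> le i j \<Longrightarrow> le j k \<Longrightarrow> x \<in> X i \<Longrightarrow> gam j k (gam i j x) = gam i k x"
  using dsf(8) by blast
lemma philit: "i \<in> I \<Longrightarrow> j \<in> I \<Longrightarrow> le i j \<Longrightarrow> l \<in> phi i \<Longrightarrow> lit_map (gam i j) l \<in> phi j"
  using dsf(9) by blast
lemma neq: "i \<in> I \<Longrightarrow> x \<in> X i \<Longrightarrow> y \<in> X i \<Longrightarrow> x \<noteq> y \<Longrightarrow> (False, EqV x y) \<in> phi i"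
  using dsf(5) unfolding diagram_formula_def by blast

lemma holds: "i \<in> I \<Longrightarrow> (True, a) \<in> phi i \<Longrightarrow> atom_holds (B i) (s i) a"
  using sh unfolding lit_holds_def by fastforce

lemma sinj: "i \<in> I \<Longrightarrow> x \<in> X i \<Longrightarrow> y \<in> X i \<Longrightarrow> s i x = s i y \<Longrightarrow> x = y"
proof (rule ccontr)
  assume a: "i \<in> I" "x \<in> X i" "y \<in> X i" "s i x = s i y" "x \<noteq> y"
  have "lit_holds (B i) (s i) (False, EqV x y)" using sh neq[OF a(1-3) a(5)] a(1) by blast
  thus False using a(4) unfolding lit_holds_def by simp
qed

lemma uff: "D \<subseteq> Pow I" "I \<in> D" "{} \<notin> D" "\<forall>A\<in>D. \<forall>B\<in>D. A \<inter> B \<in> D"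
     "\<forall>A\<in>D. \<forall>B. A \<subseteq> B \<and> B \<subseteq> I \<longrightarrow> B \<in> D"
  using uf unfolding ultrafilter_on_def by - ((elim conjE)?, assumption)+
lemma Dsub: "D \<subseteq> Pow I" using uff(1) by simp
lemma DI: "I \<in> D" using uff(2) by simp
lemma Dne: "{} \<notin> D" using uff(3) by simp
lemma Dint: "A \<in> D \<Longrightarrow> A' \<in> D \<Longrightarrow> A \<inter> A' \<in> D" using uff(4) by blast
lemma Dup: "A \<in> D \<Longrightarrow> A \<subseteq> A' \<Longrightarrow> A' \<subseteq> I \<Longrightarrow> A' \<in> D" using uff(5) by blast

lemma Dlist: "(\<forall>a\<in>set as. {k\<in>I. P a k} \<in> D) \<Longrightarrow> {k\<in>I. \<forall>a\<in>set as. P a k} \<in> D"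
proof (induction as)
  case Nil thus ?case using DI by simp
next
  case (Cons a as)
  have h1: "{k\<in>I. P a k} \<in> D" using Cons.prems by simp
  have h2: "{k\<in>I. \<forall>a\<in>set as. P a k} \<in> D" using Cons.IH Cons.prems by simp
  have "{k\<in>I. P a k} \<inter> {k\<in>I. \<forall>a\<in>set as. P a k} \<in> D" by (rule Dint[OF h1 h2])
  moreover have "{k\<in>I. P a k} \<inter> {k\<in>I. \<forall>a\<in>set as. P a k} = {k\<in>I. \<forall>a\<in>set (a#as). P a k}" by auto
  ultimately show ?case by simp
qed

lemma Dmono: "{k\<in>I. P k} \<in> D \<Longrightarrow> (\<And>k. k \<in> I \<Longrightarrow> P k \<Longrightarrow> Q k) \<Longrightarrow> {k\<in>I. Q k} \<in> D"
  by (rule Dup) auto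

lemma Dcone: "i \<in> I \<Longrightarrow> (\<And>k. k \<in> I \<Longrightarrow> le i k \<Longrightarrow> Q k) \<Longrightarrow> {k\<in>I. Q k} \<in> D"
  using Dmono[of "le i"] cones by blast

lemma Dnonempty: "{k\<in>I. P k} \<in> D \<Longrightarrow> \<exists>k\<in>I. P k"
  using Dne by (metis (mono_tags, lifting) Collect_empty_eq)

definition S0 where "S0 = {(x,i). i \<in> I \<and> x \<in> X i}"
definition R where "R = limit_rel I le X gam"
definition P0 where "P0 = {f. \<forall>i\<in>I. f i \<in> carr (B i)}"
definition UR where "UR = ultra_rel I D B"

lemma R_iff: "((x,i),(y,j)) \<in> R \<longleftrightarrow> i \<in> I \<and> j \<in> I \<and> x \<in> X i \<and> y \<in> X j \<and>
      (\<exists>k\<in>I. le i k \<and> le j k \<and> gam i k x = gam j k y)"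
  unfolding R_def limit_rel_def by simp

lemma equivR: "equiv S0 R"
proof (rule equivI)
  show "R \<subseteq> S0 \<times> S0" unfolding R_def limit_rel_def S0_def by auto
  show "refl_on S0 R" unfolding refl_on_def S0_def by (auto simp: R_iff intro: refl')
  show "sym R"
  proof (rule symI)
    fix p q assume pq: "(p,q) \<in> R"
    obtain x i y j where e: "p = (x,i)" "q = (y,j)" by (cases p, cases q) auto
    obtain k where "i \<in> I" "j \<in> I" "x \<in> X i" "y \<in> X j" "k \<in> I" "le i k" "le j k" "gam i k x = gam j k y"
      using pq e R_iff by auto
    thus "(q,p) \<in> R" using e R_iff by auto
  qed
  show "trans R"
  proof (rule transI)
    fix p q r assume "(p,q) \<in> R" "(q,r) \<in> R"
    then obtain x i y j z l where pqr: "p = (x,i)" "q = (y,j)" "r = (z,l)" by (metis prod.exhaust)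
    obtain k1 where k1: "i \<in> I" "j \<in> I" "x \<in> X i" "y \<in> X j" "k1 \<in> I" "le i k1" "le j k1" "gam i k1 x = gam j k1 y"
      using \<open>(p,q) \<in> R\<close> pqr R_iff by auto
    obtain k2 where k2: "l \<in> I" "z \<in> X l" "k2 \<in> I" "le j k2" "le l k2" "gam j k2 y = gam l k2 z"
      using \<open>(q,r) \<in> R\<close> pqr R_iff by auto
    obtain k where k: "k \<in> I" "le k1 k" "le k2 k" using dir[OF k1(5) k2(3)] by blast
    have "gam i k x = gam k1 k (gam i k1 x)" using gamc[of i k1 k x] k1 k by simp
    also have "\<dots> = gam j k y" using gamc[of j k1 k y] k1 k by simp
    also have "\<dots> = gam k2 k (gam j k2 y)" using gamc[of j k2 k y] k1 k2 k by simp
    also have "\<dots> = gam l k z" using gamc[of l k2 k z] k2 k by simp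
    finally have "gam i k x = gam l k z" .
    moreover have "le i k" "le l k" using trans'[of i k1 k] trans'[of l k2 k] k1 k2 k by auto
    ultimately show "(p, r) \<in> R" using pqr k1 k2 k R_iff by auto
  qed
qed

lemma equivUR: "equiv P0 UR"
proof (rule equivI)
  show "UR \<subseteq> P0 \<times> P0" unfolding UR_def ultra_rel_def P0_def by auto
  show "refl_on P0 UR" unfolding refl_on_def UR_def ultra_rel_def P0_def using DI by auto
  show "sym UR"
  proof (rule symI)
    fix f g assume "(f,g) \<in> UR"
    hence a: "f \<in> P0" "g \<in> P0" "{i \<in> I. f i = g i} \<in> D" unfolding UR_def ultra_rel_def P0_def by auto
    have "{i \<in> I. g i = f i} = {i \<in> I. f i = g i}" by auto
    thus "(g,f) \<in> UR" using a unfolding UR_def ultra_rel_def P0_def by auto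
  qed
  show "trans UR" unfolding trans_def UR_def ultra_rel_def
  proof (clarsimp)
    fix f g h assume a: "\<forall>i\<in>I. f i \<in> carr (B i)" "\<forall>i\<in>I. h i \<in> carr (B i)"
      "{i \<in> I. f i = g i} \<in> D" "{i \<in> I. g i = h i} \<in> D"
    show "{i \<in> I. f i = h i} \<in> D" by (rule Dup[OF Dint[OF a(3) a(4)]]) auto
  qed
qed




definition dflt where "dflt k = (SOME b. b \<in> carr (B k))"
definition fv :: "'v \<times> 'i \<Rightarrow> 'i \<Rightarrow> 'b" where
  "fv p k = (if k \<in> I \<and> le (snd p) k then s k (gam (snd p) k (fst p)) else dflt k)"
definition rep :: "('v \<times> 'i) set \<Rightarrow> 'v \<times> 'i" where "rep a = (SOME p. p \<in> a)"
definition repU :: "('i \<Rightarrow> 'b) set \<Rightarrow> 'i \<Rightarrow> 'b" where "repU a = (SOME p. p \<in> a)"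
definition h where "h a = UR `` {fv (rep a)}"

lemma dflt: "k \<in> I \<Longrightarrow> dflt k \<in> carr (B k)"
  unfolding dflt_def using algs unfolding is_alg_def by (metis ex_in_conv someI)

lemma S0_iff: "(x,i) \<in> S0 \<longleftrightarrow> i \<in> I \<and> x \<in> X i" unfolding S0_def by simp

lemma fv_P0: "p \<in> S0 \<Longrightarrow> fv p \<in> P0"
proof -
  assume "p \<in> S0"
  then obtain x i where p: "p = (x,i)" "i \<in> I" "x \<in> X i" unfolding S0_def by auto
  show "fv p \<in> P0" unfolding P0_def
  proof (intro CollectI ballI)
    fix k assume k: "k \<in> I"
    show "fv p k \<in> carr (B k)"
    proof (cases "le i k")
      case True
      hence "gam i k x \<in> X k" using gamX p k by blast
      thus ?thesis using True p k sc unfolding fv_def by simp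
    next
      case False thus ?thesis using p k dflt unfolding fv_def by simp
    qed
  qed
qed

lemma fv_cone: "i \<in> I \<Longrightarrow> k \<in> I \<Longrightarrow> le i k \<Longrightarrow> fv (x,i) k = s k (gam i k x)"
  unfolding fv_def by simp

lemma UR_D: "(f,g) \<in> UR \<Longrightarrow> {k\<in>I. f k = g k} \<in> D" unfolding UR_def ultra_rel_def by simp
lemma UR_I: "f \<in> P0 \<Longrightarrow> g \<in> P0 \<Longrightarrow> {k\<in>I. f k = g k} \<in> D \<Longrightarrow> (f,g) \<in> UR"
  unfolding UR_def ultra_rel_def P0_def by simp

lemma fv_R: "(p,q) \<in> R \<Longrightarrow> (fv p, fv q) \<in> UR"
proof -
  assume pq: "(p,q) \<in> R"
  obtain x i y j where e: "p = (x,i)" "q = (y,j)" by (cases p, cases q) auto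
  obtain k0 where k0: "i \<in> I" "j \<in> I" "x \<in> X i" "y \<in> X j" "k0 \<in> I" "le i k0" "le j k0" "gam i k0 x = gam j k0 y"
    using pq e R_iff by auto
  have "{k\<in>I. fv p k = fv q k} \<in> D"
  proof (rule Dcone[OF k0(5)])
    fix k assume k: "k \<in> I" "le k0 k"
    have ik: "le i k" "le j k" using trans' k k0 by blast+
    have "fv p k = s k (gam i k x)" using e fv_cone k0 k ik by simp
    also have "\<dots> = s k (gam k0 k (gam i k0 x))" using gamc[of i k0 k x] k0 k by simp
    also have "\<dots> = s k (gam k0 k (gam j k0 y))" using k0(8) by simp
    also have "\<dots> = s k (gam j k y)" using gamc[of j k0 k y] k0 k by simp
    also have "\<dots> = fv q k" using e fv_cone k0 k ik by simp
    finally show "fv p k = fv q k" .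
  qed
  moreover have "p \<in> S0" "q \<in> S0" using pq equivR unfolding equiv_def by auto
  ultimately show ?thesis using UR_I fv_P0 by blast
qed

lemma rep_in: assumes "a \<in> S0//R" shows "rep a \<in> a" "rep a \<in> S0" "a = R``{rep a}"
proof -
  obtain p where p: "a = R``{p}" "p \<in> S0" using assms by (rule quotientE)
  have "p \<in> a" using p equiv_class_self[OF equivR] by simp
  thus "rep a \<in> a" unfolding rep_def by (rule someI)
  hence pr: "(p, rep a) \<in> R" using p by simp
  thus "rep a \<in> S0" using equivR unfolding equiv_def by auto
  show "a = R``{rep a}" using p pr equiv_class_eq[OF equivR] by simp
qed

lemma h_class: "p \<in> S0 \<Longrightarrow> h (R``{p}) = UR``{fv p}"
proof -
  assume p: "p \<in> S0"
  have "R``{p} \<in> S0//R" using p by (rule quotientI)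
  hence "rep (R``{p}) \<in> R``{p}" by (rule rep_in)
  hence "(p, rep (R``{p})) \<in> R" by simp
  hence "(fv p, fv (rep (R``{p}))) \<in> UR" by (rule fv_R)
  thus ?thesis unfolding h_def using equiv_class_eq[OF equivUR] by simp
qed

lemma repU: "f \<in> P0 \<Longrightarrow> (f, repU (UR``{f})) \<in> UR"
proof -
  assume f: "f \<in> P0"
  have "f \<in> UR``{f}" using f equiv_class_self[OF equivUR] by simp
  hence "repU (UR``{f}) \<in> UR``{f}" unfolding repU_def by (rule someI[of "\<lambda>p. p \<in> UR``{f}"])
  thus ?thesis by simp
qed

lemma ub: "set js \<subseteq> I \<Longrightarrow> \<exists>i\<in>I. \<forall>j\<in>set js. le j i"
proof (induction js)
  case Nil thus ?case using dsf(1) by auto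
next
  case (Cons j js)
  then obtain i where i: "i \<in> I" "\<forall>j\<in>set js. le j i" by auto
  obtain k where k: "k \<in> I" "le j k" "le i k" using dir[of j i] Cons.prems i by auto
  have "\<forall>j'\<in>set (j#js). le j' k"
  proof
    fix j' assume "j' \<in> set (j#js)"
    thus "le j' k" using k i trans'[of j' i k] Cons.prems by auto
  qed
  thus ?case using k by blast
qed




abbreviation "LA \<equiv> limit_alg I le X phi gam"
abbreviation "UP \<equiv> ultraproduct I D B"

lemma carrA: "carr LA = S0//R" unfolding limit_alg_def Let_def carr_def S0_def R_def by simp
lemma cstA: "cst LA c = R``{SOME (x,i). i \<in> I \<and> x \<in> X i \<and> (True, EqC x c) \<in> phi i}"
  unfolding limit_alg_def Let_def cst_def R_def by simp
lemma oprA: "opr LA F as = R``{SOME (x,j). j \<in> I \<and> x \<in> X j \<and> (\<forall>a\<in>set as. le (snd (rep a)) j)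
    \<and> (True, EqOp F (map (\<lambda>a. gam (snd (rep a)) j (fst (rep a))) as) x) \<in> phi j}"
  unfolding limit_alg_def Let_def opr_def R_def rep_def by simp
lemma carrU: "carr UP = P0//UR" unfolding ultraproduct_def Let_def carr_def P0_def UR_def by simp
lemma cstU: "cst UP c = UR``{\<lambda>i. cst (B i) c}" unfolding ultraproduct_def Let_def cst_def UR_def by simp
lemma oprU: "opr UP F bs = UR``{\<lambda>i. opr (B i) F (map (\<lambda>a. repU a i) bs)}"
  unfolding ultraproduct_def Let_def opr_def UR_def repU_def by simp

lemma h_carr: "a \<in> S0//R \<Longrightarrow> h a \<in> P0//UR"
  unfolding h_def by (rule quotientI, rule fv_P0, rule rep_in)

lemma h_inj: "inj_on h (S0//R)"
proof (rule inj_onI)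
  fix a b assume a: "a \<in> S0//R" and b: "b \<in> S0//R" and hab: "h a = h b"
  obtain x i where ra: "rep a = (x,i)" by (cases "rep a") auto
  obtain y j where rb: "rep b = (y,j)" by (cases "rep b") auto
  have xi: "i \<in> I" "x \<in> X i" using rep_in(2)[OF a] ra S0_iff by auto
  have yj: "j \<in> I" "y \<in> X j" using rep_in(2)[OF b] rb S0_iff by auto
  have e1: "UR``{fv (rep a)} = UR``{fv (rep b)}" using hab unfolding h_def .
  have "(fv (rep a), fv (rep b)) \<in> UR"
    using e1 eq_equiv_class_iff[OF equivUR fv_P0[OF rep_in(2)[OF a]] fv_P0[OF rep_in(2)[OF b]]] by simp
  hence d1: "{k\<in>I. fv (rep a) k = fv (rep b) k} \<in> D" by (rule UR_D)
  obtain k0 where k0: "k0 \<in> I" "le i k0" "le j k0" using dir xi yj by blast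
  have cn: "{k\<in>I. le k0 k} \<in> D" using cones k0 by blast
  have "{k\<in>I. fv (rep a) k = fv (rep b) k} \<inter> {k\<in>I. le k0 k} \<in> D" by (rule Dint[OF d1 cn])
  moreover have "{k\<in>I. fv (rep a) k = fv (rep b) k} \<inter> {k\<in>I. le k0 k} = {k\<in>I. fv (rep a) k = fv (rep b) k \<and> le k0 k}" by blast
  ultimately have "{k\<in>I. fv (rep a) k = fv (rep b) k \<and> le k0 k} \<in> D" by simp
  hence "\<exists>k\<in>I. fv (rep a) k = fv (rep b) k \<and> le k0 k" by (rule Dnonempty)
  then obtain k where k: "k \<in> I" "fv (rep a) k = fv (rep b) k" "le k0 k" by blast
  have ik: "le i k" "le j k" using trans'[of i k0 k] trans'[of j k0 k] k k0 xi yj by auto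
  have fa: "fv (rep a) k = s k (gam i k x)" using fv_cone[of i k x] ra xi k ik by simp
  have fb: "fv (rep b) k = s k (gam j k y)" using fv_cone[of j k y] rb yj k ik by simp
  have g1: "gam i k x \<in> X k" by (rule gamX[OF xi(1) k(1) ik(1) xi(2)])
  have g2: "gam j k y \<in> X k" by (rule gamX[OF yj(1) k(1) ik(2) yj(2)])
  have eq: "gam i k x = gam j k y" by (rule sinj[OF k(1) g1 g2]) (use fa fb k(2) in simp)
  have "(rep a, rep b) \<in> R" unfolding ra rb R_iff using xi yj k ik eq by blast
  hence "R``{rep a} = R``{rep b}" by (rule equiv_class_eq[OF equivR])
  thus "a = b" using rep_in(3)[OF a] rep_in(3)[OF b] by simp
qed

lemma h_cst: "h (cst LA c) = cst UP c"
proof -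
  define p0 where "p0 = (SOME (x,i). i \<in> I \<and> x \<in> X i \<and> (True, EqC x c) \<in> phi i)"
  have ex: "\<exists>p. (case p of (x,i) \<Rightarrow> i \<in> I \<and> x \<in> X i \<and> (True, EqC x c) \<in> phi i)"
    using dsf(10)[rule_format, of c] by blast
  have "case p0 of (x,i) \<Rightarrow> i \<in> I \<and> x \<in> X i \<and> (True, EqC x c) \<in> phi i"
    unfolding p0_def using someI_ex[OF ex] .
  then obtain x0 i0 where p0: "p0 = (x0,i0)" "i0 \<in> I" "x0 \<in> X i0" "(True, EqC x0 c) \<in> phi i0"
    by (cases p0) auto
  have cP: "(\<lambda>k. cst (B k) c) \<in> P0" using algs unfolding P0_def is_alg_def by blast
  have "{k\<in>I. fv p0 k = cst (B k) c} \<in> D"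
  proof (rule Dcone[OF p0(2)])
    fix k assume k: "k \<in> I" "le i0 k"
    have "lit_map (gam i0 k) (True, EqC x0 c) \<in> phi k" using philit p0 k by blast
    hence "(True, EqC (gam i0 k x0) c) \<in> phi k" unfolding lit_map_def by simp
    hence "s k (gam i0 k x0) = cst (B k) c" using holds k by fastforce
    thus "fv p0 k = cst (B k) c" using p0 fv_cone k by simp
  qed
  hence "(fv p0, \<lambda>k. cst (B k) c) \<in> UR" using UR_I fv_P0 cP p0 S0_iff by blast
  hence "UR``{fv p0} = UR``{\<lambda>k. cst (B k) c}" by (rule equiv_class_eq[OF equivUR])
  moreover have "h (R``{p0}) = UR``{fv p0}" using h_class p0 S0_iff by blast
  ultimately show ?thesis using cstA cstU p0_def by simp
qed




lemma h_opr: assumes len: "length as = ar F" and sa: "set as \<subseteq> S0//R"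
  shows "h (opr LA F as) = opr UP F (map h as)"
proof -
  have rin: "\<And>a. a \<in> set as \<Longrightarrow> snd (rep a) \<in> I \<and> fst (rep a) \<in> X (snd (rep a))"
  proof -
    fix a assume "a \<in> set as"
    hence "rep a \<in> S0" using sa rep_in(2) by blast
    thus "snd (rep a) \<in> I \<and> fst (rep a) \<in> X (snd (rep a))" by (cases "rep a") (simp add: S0_iff)
  qed
  have "set (map (\<lambda>a. snd (rep a)) as) \<subseteq> I" using rin by auto
  then obtain i where i: "i \<in> I" "\<forall>j\<in>set (map (\<lambda>a. snd (rep a)) as). le j i" using ub by blast
  have ile: "\<And>a. a \<in> set as \<Longrightarrow> le (snd (rep a)) i" using i by auto
  define xs where "xs = map (\<lambda>a. gam (snd (rep a)) i (fst (rep a))) as"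
  have lx: "length xs = ar F" using len unfolding xs_def by simp
  have sx: "set xs \<subseteq> X i"
  proof
    fix y assume "y \<in> set xs"
    then obtain a where a: "a \<in> set as" "y = gam (snd (rep a)) i (fst (rep a))" unfolding xs_def by auto
    show "y \<in> X i" using gamX[of "snd (rep a)" i "fst (rep a)"] rin[OF a(1)] ile[OF a(1)] i a(2) by simp
  qed
  have "\<exists>j\<in>I. le i j \<and> (\<exists>x\<in>X j. (True, EqOp F (map (gam i j) xs) x) \<in> phi j)"
    using dsf(11) i lx sx by blast
  then obtain j x where j: "j \<in> I" "le i j" "x \<in> X j" "(True, EqOp F (map (gam i j) xs) x) \<in> phi j"
    by blast
  have meq: "map (gam i j) xs = map (\<lambda>a. gam (snd (rep a)) j (fst (rep a))) as"
    unfolding xs_def map_map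
  proof (rule map_cong[OF refl])
    fix a assume a: "a \<in> set as"
    show "(gam i j \<circ> (\<lambda>a. gam (snd (rep a)) i (fst (rep a)))) a = gam (snd (rep a)) j (fst (rep a))"
      using gamc[of "snd (rep a)" i j "fst (rep a)"] rin[OF a] ile[OF a] i j by simp
  qed
  define Q where "Q = (\<lambda>(x,j). j \<in> I \<and> x \<in> X j \<and> (\<forall>a\<in>set as. le (snd (rep a)) j)
    \<and> (True, EqOp F (map (\<lambda>a. gam (snd (rep a)) j (fst (rep a))) as) x) \<in> phi j)"
  have jall: "\<forall>a\<in>set as. le (snd (rep a)) j"
  proof
    fix a assume a: "a \<in> set as"
    show "le (snd (rep a)) j" using trans'[of "snd (rep a)" i j] rin[OF a] ile[OF a] i j by simp
  qed
  have "Q (x,j)" unfolding Q_def using j(1,3,4) jall meq by simp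
  hence "Q (SOME p. Q p)" by (rule someI)
  then obtain x1 j1 where p1: "(SOME p. Q p) = (x1,j1)" "j1 \<in> I" "x1 \<in> X j1" "\<forall>a\<in>set as. le (snd (rep a)) j1"
    "(True, EqOp F (map (\<lambda>a. gam (snd (rep a)) j1 (fst (rep a))) as) x1) \<in> phi j1"
    unfolding Q_def by (cases "SOME p. Q p") auto
  have oA: "opr LA F as = R``{(x1,j1)}" using oprA[of F as] p1(1) unfolding Q_def by simp
  have hA: "h (opr LA F as) = UR``{fv (x1,j1)}" using oA h_class p1 S0_iff by simp
  define g where "g = (\<lambda>k. opr (B k) F (map (\<lambda>b. repU b k) (map h as)))"
  have oU: "opr UP F (map h as) = UR``{g}" unfolding g_def oprU ..
  have hr: "\<And>a. a \<in> set as \<Longrightarrow> (fv (rep a), repU (h a)) \<in> UR"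
  proof -
    fix a assume "a \<in> set as"
    hence "fv (rep a) \<in> P0" using sa rep_in(2) fv_P0 by blast
    thus "(fv (rep a), repU (h a)) \<in> UR" unfolding h_def by (rule repU)
  qed
  have rP: "\<And>a. a \<in> set as \<Longrightarrow> repU (h a) \<in> P0" using hr equivUR unfolding equiv_def by blast
  have gP: "g \<in> P0" unfolding P0_def
  proof (intro CollectI ballI)
    fix k assume k: "k \<in> I"
    have "set (map (\<lambda>b. repU b k) (map h as)) \<subseteq> carr (B k)" using rP k unfolding P0_def by auto
    moreover have "length (map (\<lambda>b. repU b k) (map h as)) = ar F" using len by simp
    ultimately show "g k \<in> carr (B k)" unfolding g_def using algs k unfolding is_alg_def by blast
  qed
  have d1: "{k\<in>I. \<forall>a\<in>set as. fv (rep a) k = repU (h a) k} \<in> D"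
    by (rule Dlist) (use hr UR_D in blast)
  have cn: "{k\<in>I. le j1 k} \<in> D" using cones p1 by blast
  have "{k\<in>I. \<forall>a\<in>set as. fv (rep a) k = repU (h a) k} \<inter> {k\<in>I. le j1 k} \<in> D" by (rule Dint[OF d1 cn])
  moreover have "{k\<in>I. \<forall>a\<in>set as. fv (rep a) k = repU (h a) k} \<inter> {k\<in>I. le j1 k}
     = {k\<in>I. (\<forall>a\<in>set as. fv (rep a) k = repU (h a) k) \<and> le j1 k}" by blast
  ultimately have d2: "{k\<in>I. (\<forall>a\<in>set as. fv (rep a) k = repU (h a) k) \<and> le j1 k} \<in> D" by simp
  have "{k\<in>I. fv (x1,j1) k = g k} \<in> D"
  proof (rule Dmono[OF d2])
    fix k assume k: "k \<in> I" "(\<forall>a\<in>set as. fv (rep a) k = repU (h a) k) \<and> le j1 k"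
    define ys where "ys = map (\<lambda>a. gam (snd (rep a)) j1 (fst (rep a))) as"
    have "lit_map (gam j1 k) (True, EqOp F ys x1) \<in> phi k" using philit p1 k unfolding ys_def by blast
    hence "(True, EqOp F (map (gam j1 k) ys) (gam j1 k x1)) \<in> phi k" unfolding lit_map_def by simp
    hence e: "opr (B k) F (map (s k) (map (gam j1 k) ys)) = s k (gam j1 k x1)" using holds k by fastforce
    have "map (s k) (map (gam j1 k) ys) = map (\<lambda>b. repU b k) (map h as)"
    proof -
      have "\<And>a. a \<in> set as \<Longrightarrow> s k (gam j1 k (gam (snd (rep a)) j1 (fst (rep a)))) = repU (h a) k"
      proof -
        fix a assume a: "a \<in> set as"
        have l: "le (snd (rep a)) k" using trans' rin[OF a] p1 k a by blast
        have "s k (gam j1 k (gam (snd (rep a)) j1 (fst (rep a)))) = s k (gam (snd (rep a)) k (fst (rep a)))"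
          using gamc[of "snd (rep a)" j1 k "fst (rep a)"] rin[OF a] p1 k a by simp
        also have "\<dots> = fv (rep a) k" unfolding fv_def using k l by simp
        also have "\<dots> = repU (h a) k" using k a by blast
        finally show "s k (gam j1 k (gam (snd (rep a)) j1 (fst (rep a)))) = repU (h a) k" .
      qed
      thus ?thesis unfolding ys_def by simp
    qed
    thus "fv (x1,j1) k = g k" using e fv_cone[of j1 k x1] p1 k unfolding g_def by simp
  qed
  hence "(fv (x1,j1), g) \<in> UR" using UR_I fv_P0 gP p1 S0_iff by blast
  hence "UR``{fv (x1,j1)} = UR``{g}" by (rule equiv_class_eq[OF equivUR])
  thus ?thesis using hA oU by simp
qed

lemma embedding: "alg_embedding ar LA UP h"
  unfolding alg_embedding_def
proof (intro conjI ballI allI impI)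
  show "\<And>x. x \<in> carr LA \<Longrightarrow> h x \<in> carr UP" using h_carr carrA carrU by simp
  show "inj_on h (carr LA)" using h_inj carrA by simp
  show "\<And>c. h (cst LA c) = cst UP c" by (rule h_cst)
  show "\<And>F as. length as = ar F \<and> set as \<subseteq> carr LA \<Longrightarrow> h (opr LA F as) = opr UP F (map h as)"
    using h_opr carrA by simp
qed


end

theorem mainTheorem10:
  fixes ar :: "'f \<Rightarrow> nat"
    and I :: "'i set" and le :: "'i \<Rightarrow> 'i \<Rightarrow> bool"
    and Fs :: "'i \<Rightarrow> 'f set" and Cs :: "'i \<Rightarrow> 'c set"
    and X :: "'i \<Rightarrow> 'v set" and phi :: "'i \<Rightarrow> ('f,'c,'v) lit set"
    and gam :: "'i \<Rightarrow> 'i \<Rightarrow> 'v \<Rightarrow> 'v"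
    and B :: "'i \<Rightarrow> ('b,'f,'c) alg"
  assumes "direct_system ar I le Fs Cs X phi gam"
    and "\<forall>i\<in>I. is_alg ar (B i)"
    and "\<forall>i\<in>I. realized (B i) (X i) (phi i)"
  shows "\<exists>D. ultrafilter_on I D \<and>
           (\<exists>h. alg_embedding ar (limit_alg I le X phi gam) (ultraproduct I D B) h)"
proof -
  have Ine: "I \<noteq> {}" using assms(1) unfolding direct_system_def by (elim conjE)
  have rf: "\<forall>i\<in>I. le i i" using assms(1) unfolding direct_system_def by (elim conjE)
  have tr: "\<forall>i\<in>I. \<forall>j\<in>I. \<forall>k\<in>I. le i j \<and> le j k \<longrightarrow> le i k"
    using assms(1) unfolding direct_system_def by (elim conjE)
  have di: "\<forall>i\<in>I. \<forall>j\<in>I. \<exists>k\<in>I. le i k \<and> le j k"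
    using assms(1) unfolding direct_system_def by (elim conjE)
  define S where "S = (\<lambda>i. {k\<in>I. le i k}) ` I"
  have S1: "S \<subseteq> Pow I" unfolding S_def by blast
  have S2: "{} \<notin> S"
  proof
    assume "{} \<in> S"
    then obtain i where "i \<in> I" "{k\<in>I. le i k} = {}" unfolding S_def by blast
    thus False using rf by blast
  qed
  have S3: "\<forall>A\<in>S. \<forall>B\<in>S. \<exists>C\<in>S. C \<subseteq> A \<inter> B"
  proof (intro ballI)
    fix A B assume "A \<in> S" "B \<in> S"
    then obtain i j where ij: "i \<in> I" "j \<in> I" "A = {k\<in>I. le i k}" "B = {k\<in>I. le j k}" unfolding S_def by blast
    then obtain k where k: "k \<in> I" "le i k" "le j k" using di by blast
    have "{l\<in>I. le k l} \<subseteq> A \<inter> B"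
    proof
      fix l assume "l \<in> {l\<in>I. le k l}"
      hence "l \<in> I" "le k l" by auto
      hence "le i l" "le j l" using tr k ij by blast+
      thus "l \<in> A \<inter> B" using ij \<open>l \<in> I\<close> by blast
    qed
    moreover have "{l\<in>I. le k l} \<in> S" unfolding S_def using k by blast
    ultimately show "\<exists>C\<in>S. C \<subseteq> A \<inter> B" by blast
  qed
  obtain D where D: "ultrafilter_on I D" "S \<subseteq> D" using ultrafilter_exists[OF Ine S1 S2 S3] by blast
  have cn: "\<forall>i\<in>I. {k\<in>I. le i k} \<in> D" using D(2) unfolding S_def by blast
  have "\<forall>i\<in>I. \<exists>t. (\<forall>x\<in>X i. t x \<in> carr (B i)) \<and> (\<forall>l\<in>phi i. lit_holds (B i) t l)"
    using assms(3) unfolding realized_def by blast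
  then obtain s where s: "\<forall>i\<in>I. (\<forall>x\<in>X i. s i x \<in> carr (B i)) \<and> (\<forall>l\<in>phi i. lit_holds (B i) (s i) l)"
    by (rule bchoice[elim_format]) blast
  interpret LS ar I le Fs Cs X phi gam B D s
    by unfold_locales (use assms(1,2) s D(1) cn in auto)
  show ?thesis using D(1) embedding by blast
qed

end
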